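(* Let $k\ge2$, $\beta>0$, $J,B\in\mathbb{R}$, $\theta=\tanh(\beta J)$, $f_\theta(h)=\operatorname{arctanh}(\theta\tanh h)$, and let $(h,h')\in\mathbb{R}^2$ satisfy $$h=k f_\theta(h'+\beta B),\qquad h'=k f_\theta(h+\beta B).$$ Consider the periodic boundary condition $h_x=h$ if $d(x,x^0)$ is even and $h_x=h'$ if $d(x,x^0)$ is odd. Let $F_n=-\frac{1}{\beta|V_n|}\ln Z_n(\{h_x\})$ and $$d(t)=\frac{1}{2\beta}\ln\big(4\cosh[t+\beta(B+J)]\cosh[t+\beta(B-J)]\big).$$ Then $$\lim_{m\to\infty}F_{2m}=-\frac{1}{k+1}\big(k\,d(h)+d(h')\big),\qquad \lim_{m\to\infty}F_{2m+1}=-\frac{1}{k+1}\big(d(h)+k\,d(h')\big).$$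
   Context: $\Gamma^k=(V,L)$ is the Cayley tree in which every vertex has $k+1$ neighbours; $x^0\in V$ is a fixed root, $d(\cdot,\cdot)$ the graph distance, $V_n=\{x:d(x,x^0)\le n\}$, $W_n=\{x:d(x,x^0)=n\}$. For a boundary condition $\{h_x\in\mathbb{R}\}_{x\in V}$, $$Z_n(\{h_x\})=\sum_{\sigma\in\{-1,1\}^{V_n}}\exp\Big\{\beta J\sum_{\langle x,y\rangle\subset V_n}\sigma(x)\sigma(y)+\beta B\sum_{x\in V_n}\sigma(x)+\sum_{x\in W_n}h_x\sigma(x)\Big\},$$ the first sum running over nearest-neighbour pairs with both endpoints in $V_n$. *)

theory Defs
  imports Complex_Main "HOL-Library.FuncSet"
begin

text \<open>Concrete model of the Cayley tree with k+1 neighbours per vertex.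
  A vertex is the word of child choices along the unique path from the root x0 = [].
  The root has k+1 children (indices < k+1), every other vertex has k children
  (indices < k), so every vertex has degree k+1. The graph distance to the root
  is the length of the word; edges join x and x @ [a].\<close>

definition cayley_vertex :: "nat \<Rightarrow> nat list \<Rightarrow> bool" where
  "cayley_vertex k x \<longleftrightarrow> (\<forall>i<length x. x ! i < (if i = 0 then k + 1 else k))"

definition ball_V :: "nat \<Rightarrow> nat \<Rightarrow> nat list set" where
  "ball_V k n = {x. cayley_vertex k x \<and> length x \<le> n}"

definition sphere_W :: "nat \<Rightarrow> nat \<Rightarrow> nat list set" where
  "sphere_W k n = {x. cayley_vertex k x \<and> length x = n}"

text \<open>Nearest-neighbour pairs with both endpoints in V_n, each unordered edge
  listed once as (parent, child).\<close>
definition edges_V :: "nat \<Rightarrow> nat \<Rightarrow> (nat list \<times> nat list) set" where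
  "edges_V k n = {(x, y). x \<in> ball_V k n \<and> y \<in> ball_V k n \<and> (\<exists>a. y = x @ [a])}"

definition partition_fn :: "nat \<Rightarrow> real \<Rightarrow> real \<Rightarrow> real \<Rightarrow> (nat list \<Rightarrow> real) \<Rightarrow> nat \<Rightarrow> real" where
  "partition_fn k \<beta> J B hb n =
     (\<Sum>\<sigma> \<in> (ball_V k n \<rightarrow>\<^sub>E {-1, 1::real}).
        exp (\<beta> * J * (\<Sum>(x, y) \<in> edges_V k n. \<sigma> x * \<sigma> y)
             + \<beta> * B * (\<Sum>x \<in> ball_V k n. \<sigma> x)
             + (\<Sum>x \<in> sphere_W k n. hb x * \<sigma> x)))"

definition free_energy :: "nat \<Rightarrow> real \<Rightarrow> real \<Rightarrow> real \<Rightarrow> (nat list \<Rightarrow> real) \<Rightarrow> nat \<Rightarrow> real" where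
  "free_energy k \<beta> J B hb n =
     - (1 / (\<beta> * real (card (ball_V k n)))) * ln (partition_fn k \<beta> J B hb n)"

definition f_theta :: "real \<Rightarrow> real \<Rightarrow> real" where
  "f_theta \<theta> t = artanh (\<theta> * tanh t)"

definition d_fun :: "real \<Rightarrow> real \<Rightarrow> real \<Rightarrow> real \<Rightarrow> real" where
  "d_fun \<beta> J B t = 1 / (2 * \<beta>) * ln (4 * cosh (t + \<beta> * (B + J)) * cosh (t + \<beta> * (B - J)))"

end

theory Submission
  imports Defs "HOL-Library.FuncSet"
begin


lemma cv_snoc: "cayley_vertex k (x @ [a]) \<longleftrightarrow> cayley_vertex k x \<and> a < (if x = [] then k + 1 else k)"
  unfolding cayley_vertex_def
  apply (auto simp: nth_append less_Suc_eq split: if_splits)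
  done

lemma cv_butlast: "cayley_vertex k y \<Longrightarrow> cayley_vertex k (butlast y)"
  by (cases y rule: rev_cases) (auto simp: cv_snoc)

lemma ball_Suc: "ball_V k (Suc n) = ball_V k n \<union> sphere_W k (Suc n)"
  unfolding ball_V_def sphere_W_def by auto

lemma ball_sphere_disj: "ball_V k n \<inter> sphere_W k (Suc n) = {}"
  unfolding ball_V_def sphere_W_def by auto

lemma finite_ball: "finite (ball_V k n)"
proof -
  have "ball_V k n \<subseteq> {xs. set xs \<subseteq> {..<k+1} \<and> length xs \<le> n}"
    unfolding ball_V_def cayley_vertex_def
    apply (auto simp: in_set_conv_nth split: if_splits)
    subgoal for x i by (cases "i = 0") auto
    done
  moreover have "finite {xs. set xs \<subseteq> {..<k+1} \<and> length xs \<le> n}"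
    by (rule finite_lists_length_le) auto
  ultimately show ?thesis by (rule finite_subset)
qed

lemma sphere_sub: "sphere_W k n \<subseteq> ball_V k n"
  unfolding ball_V_def sphere_W_def by auto

lemma finite_sphere: "finite (sphere_W k n)"
  using finite_subset[OF sphere_sub finite_ball] .

lemma sphere_ne: assumes "k \<ge> 1" shows "sphere_W k n \<noteq> {}"
proof -
  have "replicate n 0 \<in> sphere_W k n"
    unfolding sphere_W_def cayley_vertex_def using assms by auto
  thus ?thesis by auto
qed

lemma sphere_Suc: assumes "n \<ge> 1"
  shows "sphere_W k (Suc n) = (\<lambda>(x,a). x @ [a]) ` (sphere_W k n \<times> {..<k})"
proof (rule set_eqI, rule iffI)
  fix y assume y: "y \<in> sphere_W k (Suc n)"
  then have ne: "y \<noteq> []" unfolding sphere_W_def by auto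
  obtain x a where xa: "y = x @ [a]" using rev_exhaust[of y] ne by blast
  have lx: "length x = n" using y xa unfolding sphere_W_def by simp
  with assms have xne: "x \<noteq> []" by auto
  have "cayley_vertex k (x @ [a])" using y xa unfolding sphere_W_def by simp
  hence "cayley_vertex k x" "a < k" using xne by (simp_all add: cv_snoc)
  with lx have "(x, a) \<in> sphere_W k n \<times> {..<k}" unfolding sphere_W_def by simp
  with xa show "y \<in> (\<lambda>(x,a). x @ [a]) ` (sphere_W k n \<times> {..<k})" by force
next
  fix y assume "y \<in> (\<lambda>(x,a). x @ [a]) ` (sphere_W k n \<times> {..<k})"
  then obtain x a where xa: "y = x @ [a]" "x \<in> sphere_W k n" "a < k" by auto
  then have "x \<noteq> []" "cayley_vertex k x" "length x = n" using assms unfolding sphere_W_def by auto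
  with xa show "y \<in> sphere_W k (Suc n)" unfolding sphere_W_def by (simp add: cv_snoc)
qed

lemma sum_sphere_Suc:
  fixes \<phi> :: "nat list \<Rightarrow> real"
  assumes "n \<ge> 1"
  shows "(\<Sum>y\<in>sphere_W k (Suc n). \<phi> (butlast y)) = real k * (\<Sum>x\<in>sphere_W k n. \<phi> x)"
proof -
  have inj: "inj_on (\<lambda>(x,a). x @ [a]) (sphere_W k n \<times> {..<k})"
    by (auto simp: inj_on_def)
  have "(\<Sum>y\<in>sphere_W k (Suc n). \<phi> (butlast y)) = (\<Sum>(x,a)\<in>sphere_W k n \<times> {..<k}. \<phi> x)"
    unfolding sphere_Suc[OF assms] by (subst sum.reindex[OF inj]) (auto intro!: sum.cong)
  also have "\<dots> = (\<Sum>x\<in>sphere_W k n. real k * \<phi> x)"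
    by (subst sum.cartesian_product[symmetric]) simp
  finally show ?thesis by (simp add: sum_distrib_left)
qed

lemma card_sphere_Suc: assumes "n \<ge> 1"
  shows "real (card (sphere_W k (Suc n))) = real k * real (card (sphere_W k n))"
  using sum_sphere_Suc[OF assms, of "\<lambda>_. 1"] by simp

lemma card_ball_Suc: "real (card (ball_V k (Suc n))) = real (card (ball_V k n)) + real (card (sphere_W k (Suc n)))"
  unfolding ball_Suc using ball_sphere_disj finite_ball finite_sphere
  by (subst card_Un_disjoint) auto

lemma edges_Suc: "edges_V k (Suc n) = edges_V k n \<union> (\<lambda>y. (butlast y, y)) ` sphere_W k (Suc n)"
proof (rule set_eqI)
  fix p :: "nat list \<times> nat list"
  obtain x y where p: "p = (x,y)" by (cases p)
  show "p \<in> edges_V k (Suc n) \<longleftrightarrow> p \<in> edges_V k n \<union> (\<lambda>y. (butlast y, y)) ` sphere_W k (Suc n)"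
  proof
    assume "p \<in> edges_V k (Suc n)"
    then obtain a where a: "y = x @ [a]" "cayley_vertex k x" "cayley_vertex k y" "length x \<le> Suc n" "length y \<le> Suc n"
      unfolding p edges_V_def ball_V_def by auto
    show "p \<in> edges_V k n \<union> (\<lambda>y. (butlast y, y)) ` sphere_W k (Suc n)"
    proof (cases "length y \<le> n")
      case True
      then show ?thesis using a unfolding p edges_V_def ball_V_def by auto
    next
      case False
      then have "y \<in> sphere_W k (Suc n)" using a unfolding sphere_W_def by auto
      moreover have "p = (butlast y, y)" using a p by simp
      ultimately show ?thesis by blast
    qed
  next
    assume "p \<in> edges_V k n \<union> (\<lambda>y. (butlast y, y)) ` sphere_W k (Suc n)"
    then show "p \<in> edges_V k (Suc n)"
    proof
      assume "p \<in> edges_V k n" thus ?thesis unfolding edges_V_def ball_V_def by auto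
    next
      assume "p \<in> (\<lambda>y. (butlast y, y)) ` sphere_W k (Suc n)"
      then obtain z where z: "z \<in> sphere_W k (Suc n)" "p = (butlast z, z)" by auto
      then have "z \<noteq> []" unfolding sphere_W_def by auto
      then have zz: "z = butlast z @ [last z]" by simp
      from z have "cayley_vertex k (butlast z)" "length (butlast z) \<le> Suc n"
        unfolding sphere_W_def using cv_butlast by auto
      with z zz show ?thesis unfolding edges_V_def ball_V_def sphere_W_def by auto
    qed
  qed
qed

lemma edges_disj: "edges_V k n \<inter> (\<lambda>y. (butlast y, y)) ` sphere_W k (Suc n) = {}"
  unfolding edges_V_def ball_V_def sphere_W_def by auto

lemma finite_edges: "finite (edges_V k n)"
  by (rule finite_subset[of _ "ball_V k n \<times> ball_V k n"]) (auto simp: edges_V_def finite_ball)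



lemma sum_PiE_Un:
  fixes P :: "('a \<Rightarrow> 'b) \<Rightarrow> real"
  assumes "finite A" "finite B" "A \<inter> B = {}" "finite S"
  shows "(\<Sum>\<sigma>\<in>(A \<union> B) \<rightarrow>\<^sub>E S. P \<sigma>) =
         (\<Sum>\<tau>\<in>A \<rightarrow>\<^sub>E S. \<Sum>\<rho>\<in>B \<rightarrow>\<^sub>E S. P (\<lambda>x. if x \<in> A then \<tau> x else \<rho> x))"
proof -
  have "(\<Sum>\<sigma>\<in>(A \<union> B) \<rightarrow>\<^sub>E S. P \<sigma>) =
        (\<Sum>(\<tau>,\<rho>)\<in>(A \<rightarrow>\<^sub>E S) \<times> (B \<rightarrow>\<^sub>E S). P (\<lambda>x. if x \<in> A then \<tau> x else \<rho> x))"
    apply (rule sum.reindex_bij_witness[of _ "\<lambda>(\<tau>,\<rho>). (\<lambda>x. if x \<in> A then \<tau> x else \<rho> x)"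
                 "\<lambda>\<sigma>. (restrict \<sigma> A, restrict \<sigma> B)"])
    using assms(3)
    apply (auto simp: PiE_def extensional_def fun_eq_iff Pi_def)
    apply (rule arg_cong[where f=P])
    apply (auto simp: fun_eq_iff)
    done
  also have "\<dots> = (\<Sum>\<tau>\<in>A \<rightarrow>\<^sub>E S. \<Sum>\<rho>\<in>B \<rightarrow>\<^sub>E S. P (\<lambda>x. if x \<in> A then \<tau> x else \<rho> x))"
    by (rule sum.cartesian_product[symmetric])
  finally show ?thesis .
qed

lemma cosh_identity:
  fixes a u t :: real
  assumes "t \<in> {-1, 1}"
  shows "(\<Sum>s\<in>{-1, 1::real}. exp (s * (a * t + u))) =
         exp (ln (4 * cosh (u + a) * cosh (u - a)) / 2) * exp (t * artanh (tanh a * tanh u))"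
proof -
  define Cp where "Cp = cosh (u + a)"
  define Cm where "Cm = cosh (u - a)"
  have Cp: "Cp > 0" and Cm: "Cm > 0" unfolding Cp_def Cm_def by (auto intro: cosh_real_pos)
  have ca: "cosh a > 0" and cu: "cosh u > 0" by (auto intro: cosh_real_pos)
  have Cm': "cosh a * cosh u - sinh a * sinh u > 0"
    using Cm unfolding Cm_def cosh_diff by (simp add: mult.commute)
  have Cp': "Cp = cosh a * cosh u + sinh a * sinh u"
    unfolding Cp_def cosh_add by (simp add: mult.commute)
  have Cm'': "Cm = cosh a * cosh u - sinh a * sinh u"
    unfolding Cm_def cosh_diff by (simp add: mult.commute)
  have e1: "1 + tanh a * tanh u = (cosh a * cosh u + sinh a * sinh u) / (cosh a * cosh u)"
    unfolding tanh_def using ca cu by (simp add: field_simps)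
  have e2: "1 - tanh a * tanh u = (cosh a * cosh u - sinh a * sinh u) / (cosh a * cosh u)"
    unfolding tanh_def using ca cu by (simp add: field_simps)
  have "(1 + tanh a * tanh u) / (1 - tanh a * tanh u) = Cp / Cm"
    unfolding e1 e2 Cp' Cm'' using ca cu Cm' by simp
  then have art: "artanh (tanh a * tanh u) = (ln Cp - ln Cm) / 2"
    unfolding artanh_def using Cp Cm by (simp add: ln_div)
  have ln4: "ln (4::real) = 2 * ln 2"
    using ln_realpow[of 2 2] by simp
  have "ln (4 * Cp * Cm) = ln 4 + ln Cp + ln Cm" using Cp Cm by (simp add: ln_mult)
  hence l4: "ln (4 * Cp * Cm) = 2 * ln 2 + ln Cp + ln Cm" using ln4 by simp
  have lhs: "(\<Sum>s\<in>{-1, 1::real}. exp (s * (a * t + u))) = exp (a * t + u) + exp (- (a * t + u))"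
    by simp
  show ?thesis
  proof (cases "t = 1")
    case True
    have "ln (4 * Cp * Cm) / 2 + t * artanh (tanh a * tanh u) = ln 2 + ln Cp"
      unfolding art l4 True by (simp add: field_simps)
    hence "exp (ln (4 * Cp * Cm) / 2) * exp (t * artanh (tanh a * tanh u)) = exp (ln 2 + ln Cp)"
      by (simp add: exp_add[symmetric])
    also have "\<dots> = 2 * Cp" using Cp by (simp add: exp_add)
    also have "\<dots> = exp (a * t + u) + exp (- (a * t + u))"
      unfolding Cp_def cosh_def True by (simp add: add.commute)
    finally show ?thesis unfolding lhs Cp_def Cm_def by simp
  next
    case False
    then have t: "t = -1" using assms by auto
    have "ln (4 * Cp * Cm) / 2 + t * artanh (tanh a * tanh u) = ln 2 + ln Cm"
      unfolding art l4 t by (simp add: field_simps)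
    hence "exp (ln (4 * Cp * Cm) / 2) * exp (t * artanh (tanh a * tanh u)) = exp (ln 2 + ln Cm)"
      by (simp add: exp_add[symmetric])
    also have "\<dots> = 2 * Cm" using Cm by (simp add: exp_add)
    also have "\<dots> = exp (a * t + u) + exp (- (a * t + u))"
      unfolding Cm_def cosh_def t by (simp add: add.commute)
    finally show ?thesis unfolding lhs Cp_def Cm_def by simp
  qed
qed



lemma step:
  fixes k n :: nat and \<beta> J B c :: real and g :: "nat list \<Rightarrow> real"
  assumes n: "n \<ge> 1" and \<beta>: "\<beta> > 0"
    and gW: "\<And>y. y \<in> sphere_W k (Suc n) \<Longrightarrow> g y = c"
    and gV: "\<And>x. x \<in> sphere_W k n \<Longrightarrow> g x = real k * f_theta (tanh (\<beta> * J)) (c + \<beta> * B)"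
  shows "partition_fn k \<beta> J B g (Suc n) =
         exp (\<beta> * d_fun \<beta> J B c) ^ card (sphere_W k (Suc n)) * partition_fn k \<beta> J B g n"
proof -
  define S :: "real set" where "S = {-1, 1}"
  define A where "A = ball_V k n"
  define W where "W = sphere_W k (Suc n)"
  define u where "u = c + \<beta> * B"
  define a where "a = \<beta> * J"
  define F where "F = artanh (tanh a * tanh u)"
  define E where "E = exp (ln (4 * cosh (u + a) * cosh (u - a)) / 2)"
  define base where "base = (\<lambda>\<tau>::nat list \<Rightarrow> real. \<beta> * J * (\<Sum>(x, y) \<in> edges_V k n. \<tau> x * \<tau> y)
             + \<beta> * B * (\<Sum>x \<in> ball_V k n. \<tau> x))"
  define mg where "mg = (\<lambda>(\<tau>::nat list \<Rightarrow> real) \<rho> x. if x \<in> A then \<tau> x else \<rho> x)"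
  have E: "E = exp (\<beta> * d_fun \<beta> J B c)"
  proof -
    have "c + \<beta> * (B + J) = u + a" "c + \<beta> * (B - J) = u - a"
      unfolding u_def a_def by (simp_all add: algebra_simps)
    thus ?thesis unfolding E_def d_fun_def using \<beta> by simp
  qed
  have fA: "finite A" and fW: "finite W" unfolding A_def W_def
    by (auto simp: finite_ball finite_sphere)
  have disj: "A \<inter> W = {}" unfolding A_def W_def by (rule ball_sphere_disj)
  have parW: "\<And>y. y \<in> W \<Longrightarrow> butlast y \<in> A \<and> y \<notin> A"
    unfolding A_def W_def ball_V_def sphere_W_def using cv_butlast by auto
  have inj: "inj_on (\<lambda>y. (butlast y, y)) W" by (auto simp: inj_on_def)
  have expo: "\<beta> * J * (\<Sum>(x, y) \<in> edges_V k (Suc n). mg \<tau> \<rho> x * mg \<tau> \<rho> y)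
             + \<beta> * B * (\<Sum>x \<in> ball_V k (Suc n). mg \<tau> \<rho> x)
             + (\<Sum>x \<in> sphere_W k (Suc n). g x * mg \<tau> \<rho> x)
           = base \<tau> + (\<Sum>y\<in>W. \<rho> y * (a * \<tau> (butlast y) + u))" for \<tau> \<rho>
  proof -
    have e1: "(\<Sum>(x, y) \<in> edges_V k (Suc n). mg \<tau> \<rho> x * mg \<tau> \<rho> y) =
          (\<Sum>(x, y) \<in> edges_V k n. \<tau> x * \<tau> y) + (\<Sum>y\<in>W. \<tau> (butlast y) * \<rho> y)"
    proof -
      have "(\<Sum>(x, y) \<in> edges_V k (Suc n). mg \<tau> \<rho> x * mg \<tau> \<rho> y) =
            (\<Sum>(x, y) \<in> edges_V k n. mg \<tau> \<rho> x * mg \<tau> \<rho> y) +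
            (\<Sum>(x, y) \<in> (\<lambda>y. (butlast y, y)) ` W. mg \<tau> \<rho> x * mg \<tau> \<rho> y)"
        unfolding edges_Suc W_def
        by (rule sum.union_disjoint) (auto simp: finite_edges finite_sphere edges_disj)
      also have "(\<Sum>(x, y) \<in> edges_V k n. mg \<tau> \<rho> x * mg \<tau> \<rho> y) = (\<Sum>(x, y) \<in> edges_V k n. \<tau> x * \<tau> y)"
        by (rule sum.cong) (auto simp: mg_def A_def edges_V_def)
      also have "(\<Sum>(x, y) \<in> (\<lambda>y. (butlast y, y)) ` W. mg \<tau> \<rho> x * mg \<tau> \<rho> y) =
                 (\<Sum>y\<in>W. \<tau> (butlast y) * \<rho> y)"
        by (subst sum.reindex[OF inj]) (auto intro!: sum.cong simp: mg_def parW)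
      finally show ?thesis .
    qed
    have e2: "(\<Sum>x \<in> ball_V k (Suc n). mg \<tau> \<rho> x) = (\<Sum>x \<in> ball_V k n. \<tau> x) + (\<Sum>y\<in>W. \<rho> y)"
    proof -
      have "(\<Sum>x \<in> ball_V k (Suc n). mg \<tau> \<rho> x) = (\<Sum>x \<in> A. mg \<tau> \<rho> x) + (\<Sum>y\<in>W. mg \<tau> \<rho> y)"
        unfolding ball_Suc A_def[symmetric] W_def[symmetric] using fA fW disj
        by (rule sum.union_disjoint)
      also have "(\<Sum>x \<in> A. mg \<tau> \<rho> x) = (\<Sum>x \<in> ball_V k n. \<tau> x)"
        unfolding A_def by (rule sum.cong) (auto simp: mg_def A_def)
      also have "(\<Sum>y\<in>W. mg \<tau> \<rho> y) = (\<Sum>y\<in>W. \<rho> y)"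
        by (rule sum.cong) (auto simp: mg_def parW)
      finally show ?thesis .
    qed
    have e3: "(\<Sum>x \<in> sphere_W k (Suc n). g x * mg \<tau> \<rho> x) = (\<Sum>y\<in>W. c * \<rho> y)"
      unfolding W_def[symmetric] by (rule sum.cong) (auto simp: mg_def parW gW W_def)
    show ?thesis
      unfolding e1 e2 e3 base_def a_def u_def
      by (simp add: algebra_simps sum.distrib sum_distrib_left)
  qed
  have inner: "(\<Sum>\<rho>\<in>W \<rightarrow>\<^sub>E S. exp (\<Sum>y\<in>W. \<rho> y * (a * \<tau> (butlast y) + u))) =
       E ^ card W * exp (\<Sum>x\<in>sphere_W k n. g x * \<tau> x)"
    if \<tau>: "\<tau> \<in> A \<rightarrow>\<^sub>E S" for \<tau>
  proof -
    have "(\<Sum>\<rho>\<in>W \<rightarrow>\<^sub>E S. exp (\<Sum>y\<in>W. \<rho> y * (a * \<tau> (butlast y) + u))) =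
          (\<Sum>\<rho>\<in>W \<rightarrow>\<^sub>E S. \<Prod>y\<in>W. exp (\<rho> y * (a * \<tau> (butlast y) + u)))"
      using fW by (simp add: exp_sum)
    also have "\<dots> = (\<Prod>y\<in>W. \<Sum>s\<in>S. exp (s * (a * \<tau> (butlast y) + u)))"
      by (rule prod_sum_PiE[symmetric]) (auto simp: fW S_def)
    also have "\<dots> = (\<Prod>y\<in>W. E * exp (\<tau> (butlast y) * F))"
    proof (rule prod.cong[OF refl])
      fix y assume "y \<in> W"
      then have "\<tau> (butlast y) \<in> {-1, 1}" using \<tau> parW unfolding S_def by auto
      from cosh_identity[OF this, of a u]
      show "(\<Sum>s\<in>S. exp (s * (a * \<tau> (butlast y) + u))) = E * exp (\<tau> (butlast y) * F)"
        unfolding S_def E_def F_def by (simp add: mult.commute)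
    qed
    also have "\<dots> = E ^ card W * exp (\<Sum>y\<in>W. \<tau> (butlast y) * F)"
      using fW by (simp add: prod.distrib exp_sum)
    also have "(\<Sum>y\<in>W. \<tau> (butlast y) * F) = real k * (\<Sum>x\<in>sphere_W k n. \<tau> x * F)"
      unfolding W_def by (rule sum_sphere_Suc[OF n])
    also have "\<dots> = (\<Sum>x\<in>sphere_W k n. g x * \<tau> x)"
      unfolding sum_distrib_left
      by (rule sum.cong) (auto simp: gV f_theta_def F_def a_def u_def)
    finally show ?thesis .
  qed
  have "partition_fn k \<beta> J B g (Suc n) =
     (\<Sum>\<tau>\<in>A \<rightarrow>\<^sub>E S. \<Sum>\<rho>\<in>W \<rightarrow>\<^sub>E S. exp (base \<tau> + (\<Sum>y\<in>W. \<rho> y * (a * \<tau> (butlast y) + u))))"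
    unfolding partition_fn_def ball_Suc S_def[symmetric] A_def[symmetric] W_def[symmetric]
    apply (subst sum_PiE_Un[OF fA fW disj])
     apply (simp add: S_def)
    using expo unfolding mg_def A_def W_def ball_Suc
    apply simp
    done
  also have "\<dots> = (\<Sum>\<tau>\<in>A \<rightarrow>\<^sub>E S. exp (base \<tau>) * (E ^ card W * exp (\<Sum>x\<in>sphere_W k n. g x * \<tau> x)))"
    by (rule sum.cong[OF refl]) (simp add: exp_add sum_distrib_left[symmetric] inner)
  also have "\<dots> = E ^ card W * partition_fn k \<beta> J B g n"
    unfolding partition_fn_def sum_distrib_left A_def S_def base_def
    by (rule sum.cong[OF refl]) (simp add: exp_add)
  finally show ?thesis unfolding E W_def .
qed



lemma Z_pos: "partition_fn k \<beta> J B g n > 0"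
  unfolding partition_fn_def
  by (rule sum_pos) (auto simp: finite_PiE finite_ball PiE_eq_empty_iff)

lemma main_limit:
  fixes L V :: "nat \<Rightarrow> real" and C l :: real
  assumes "\<And>m. m \<ge> M \<Longrightarrow> L m - l * V m = C"
    and "\<And>m. V m \<ge> real m"
    and "\<And>m. V m > 0"
  shows "(\<lambda>m. - L m / V m) \<longlonglongrightarrow> - l"
proof -
  have Vlim: "filterlim V at_infinity sequentially"
    by (rule filterlim_at_top_imp_at_infinity,
        rule filterlim_at_top_mono[OF filterlim_real_sequentially]) (use assms(2) in auto)
  have "(\<lambda>m. - (l + C / V m)) \<longlonglongrightarrow> - (l + 0)"
    by (intro tendsto_intros tendsto_divide_0[OF tendsto_const Vlim])
  moreover have "eventually (\<lambda>m. - (l + C / V m) = - L m / V m) sequentially"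
    unfolding eventually_sequentially
  proof (intro exI allI impI)
    fix m assume "m \<ge> M"
    with assms(1)[of m] assms(3)[of m] show "- (l + C / V m) = - L m / V m"
      by (simp add: field_simps)
  qed
  ultimately show ?thesis by (simp add: tendsto_cong)
qed



theorem proposition3:
  fixes k :: nat and \<beta> J B h h' :: real
  assumes "k \<ge> 2" and "\<beta> > 0"
    and "h = real k * f_theta (tanh (\<beta> * J)) (h' + \<beta> * B)"
    and "h' = real k * f_theta (tanh (\<beta> * J)) (h + \<beta> * B)"
  defines "hb \<equiv> (\<lambda>x::nat list. if even (length x) then h else h')"
  shows "((\<lambda>m. free_energy k \<beta> J B hb (2 * m))
           \<longlonglongrightarrow> - (1 / (real k + 1)) * (real k * d_fun \<beta> J B h + d_fun \<beta> J B h')) \<and>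
         ((\<lambda>m. free_energy k \<beta> J B hb (2 * m + 1))
           \<longlonglongrightarrow> - (1 / (real k + 1)) * (d_fun \<beta> J B h + real k * d_fun \<beta> J B h'))"
proof -
  define L where "L = (\<lambda>n. ln (partition_fn k \<beta> J B hb n) / \<beta>)"
  define V where "V = (\<lambda>n. real (card (ball_V k n)))"
  define w where "w = (\<lambda>n. real (card (sphere_W k n)))"
  define dd where "dd = (\<lambda>n::nat. d_fun \<beta> J B (if even n then h else h'))"
  have k1: "k \<ge> 1" using assms(1) by simp
  have rec: "L (Suc n) = L n + w (Suc n) * dd (Suc n)" if n: "n \<ge> 1" for n
  proof -
    define c where "c = (if even (Suc n) then h else h')"
    have "partition_fn k \<beta> J B hb (Suc n) =
         exp (\<beta> * d_fun \<beta> J B c) ^ card (sphere_W k (Suc n)) * partition_fn k \<beta> J B hb n"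
    proof (rule step[OF n assms(2)])
      fix y assume "y \<in> sphere_W k (Suc n)"
      thus "hb y = c" unfolding hb_def c_def sphere_W_def by auto
    next
      fix x assume "x \<in> sphere_W k n"
      thus "hb x = real k * f_theta (tanh (\<beta> * J)) (c + \<beta> * B)"
        unfolding hb_def c_def sphere_W_def using assms(3,4) by auto
    qed
    hence "ln (partition_fn k \<beta> J B hb (Suc n)) =
           real (card (sphere_W k (Suc n))) * (\<beta> * d_fun \<beta> J B c) + ln (partition_fn k \<beta> J B hb n)"
      using Z_pos[of k \<beta> J B hb n] by (simp add: ln_mult exp_of_nat_mult[symmetric] del: exp_of_nat_mult)
    thus ?thesis unfolding L_def w_def dd_def c_def using assms(2) by (simp add: field_simps)
  qed
  have Vrec: "V (Suc n) = V n + w (Suc n)" for n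
    unfolding V_def w_def by (rule card_ball_Suc)
  have wrec: "w (Suc n) = real k * w n" if "n \<ge> 1" for n
    unfolding w_def by (rule card_sphere_Suc[OF that])
  have w1: "w n \<ge> 1" for n
    unfolding w_def using sphere_ne[OF k1] finite_sphere
    by (metis One_nat_def Suc_leI card_gt_0_iff of_nat_1 of_nat_le_iff)
  have Vge: "V n \<ge> real n + 1" for n
  proof (induction n)
    case 0
    have "[] \<in> ball_V k 0" unfolding ball_V_def cayley_vertex_def by simp
    hence "card (ball_V k 0) \<ge> 1" using finite_ball
      by (metis One_nat_def Suc_leI card_gt_0_iff empty_iff)
    thus ?case unfolding V_def by simp
  next
    case (Suc n) thus ?case using Vrec[of n] w1[of "Suc n"] by simp
  qed
  have two: "L (Suc (Suc N)) - l * V (Suc (Suc N)) = L N - l * V N"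
    if N: "N \<ge> 1" and l: "l * (1 + real k) = dd (Suc N) + real k * dd (Suc (Suc N))" for N l
  proof -
    have "L (Suc (Suc N)) = L N + w (Suc N) * (dd (Suc N) + real k * dd (Suc (Suc N)))"
      using rec[of N] rec[of "Suc N"] wrec[of "Suc N"] N by (simp add: algebra_simps)
    moreover have "V (Suc (Suc N)) = V N + w (Suc N) * (1 + real k)"
      using Vrec[of N] Vrec[of "Suc N"] wrec[of "Suc N"] N by (simp add: algebra_simps)
    ultimately show ?thesis unfolding l[symmetric] by (simp add: algebra_simps)
  qed
  define le where "le = (1 / (real k + 1)) * (real k * d_fun \<beta> J B h + d_fun \<beta> J B h')"
  define lo where "lo = (1 / (real k + 1)) * (d_fun \<beta> J B h + real k * d_fun \<beta> J B h')"
  have even_const: "L (2 * m) - le * V (2 * m) = L 2 - le * V 2" if "m \<ge> 1" for m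
    using that
  proof (induction m rule: nat_induct_at_least)
    case base thus ?case by simp
  next
    case (Suc m)
    have "le * (1 + real k) = dd (Suc (2*m)) + real k * dd (Suc (Suc (2*m)))"
      unfolding le_def dd_def by (simp add: field_simps)
    from two[OF _ this] Suc show ?case by simp
  qed
  have odd_const: "L (2 * m + 1) - lo * V (2 * m + 1) = L 1 - lo * V 1" for m
  proof (induction m)
    case 0 thus ?case by simp
  next
    case (Suc m)
    have "lo * (1 + real k) = dd (Suc (2*m+1)) + real k * dd (Suc (Suc (2*m+1)))"
      unfolding lo_def dd_def by (simp add: field_simps)
    from two[OF _ this] Suc show ?case by simp
  qed
  have fe: "free_energy k \<beta> J B hb n = - L n / V n" for n
    unfolding free_energy_def L_def V_def by simp
  have Vge2: "real m \<le> V (2*m)" for m using Vge[of "2*m"] by simp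
  have Vge3: "real m \<le> V (2*m+1)" for m using Vge[of "2*m+1"] by simp
  have Vpos: "V n > 0" for n using Vge[of n] by linarith
  have "(\<lambda>m. - L (2*m) / V (2*m)) \<longlonglongrightarrow> - le"
    by (rule main_limit[of 1 "\<lambda>m. L (2*m)" le "\<lambda>m. V (2*m)"])
       (use even_const Vpos Vge2 in auto)
  moreover have "(\<lambda>m. - L (2*m+1) / V (2*m+1)) \<longlonglongrightarrow> - lo"
    by (rule main_limit[of 0 "\<lambda>m. L (2*m+1)" lo "\<lambda>m. V (2*m+1)"])
       (use odd_const Vpos Vge3 in auto)
  ultimately show ?thesis unfolding fe le_def lo_def by simp
qed


end
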